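(* Let $\Pi$ be an $n$-dimensional linear space satisfying the exchange axiom and let $S$ and $U$ be distinct subspaces of $\Pi$. The following are equivalent: (1) there exists a base of $\Pi$ such that both $S$ and $U$ are spanned by points of this base; (2) $\dim\overline{S\cup U}=\dim S+\dim U-\dim(S\cap U)$.
   Context: A linear space $\Pi=(P,\mathcal{L})$ is a set $P$ of points with a family $\mathcal{L}$ of proper subsets (lines) such that each line has at least two points and any two distinct points $p,q$ lie on exactly one line $pq$. A subspace is a set $S\subset P$ with $pq\subset S$ for all distinct $p,q\in S$; $\overline{X}$ is the smallest subspace containing $X$. A set $X$ is independent if $\overline{X}$ is not spanned by a proper subset of $X$; a base of $\Pi$ is an independent set spanning $P$. A subspace is $m$-dimensional if $m+1$ is the smallest number of points spanning it (the empty set is $(-1)$-dimensional). Exchange axiom: for every $X\subset P$ and $p_1,p_2\in P\setminus\overline{X}$, $p_2\in\overline{X\cup\{p_1\}}$ implies $p_1\in\overline{X\cup\{p_2\}}$. *)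

theory Defs
  imports Main
begin

definition linear_space :: "'a set \<Rightarrow> 'a set set \<Rightarrow> bool" where
  "linear_space P L \<longleftrightarrow>
     (\<forall>l\<in>L. l \<subset> P \<and> (\<exists>p q. p \<in> l \<and> q \<in> l \<and> p \<noteq> q)) \<and>
     (\<forall>p\<in>P. \<forall>q\<in>P. p \<noteq> q \<longrightarrow> (\<exists>!l. l \<in> L \<and> p \<in> l \<and> q \<in> l))"

definition line_through :: "'a set set \<Rightarrow> 'a \<Rightarrow> 'a \<Rightarrow> 'a set" where
  "line_through L p q = (THE l. l \<in> L \<and> p \<in> l \<and> q \<in> l)"

definition subspace :: "'a set \<Rightarrow> 'a set set \<Rightarrow> 'a set \<Rightarrow> bool" where
  "subspace P L S \<longleftrightarrow> S \<subseteq> P \<and>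
     (\<forall>p\<in>S. \<forall>q\<in>S. p \<noteq> q \<longrightarrow> line_through L p q \<subseteq> S)"

definition span :: "'a set \<Rightarrow> 'a set set \<Rightarrow> 'a set \<Rightarrow> 'a set" where
  "span P L X = \<Inter> {S. subspace P L S \<and> X \<subseteq> S}"

definition independent :: "'a set \<Rightarrow> 'a set set \<Rightarrow> 'a set \<Rightarrow> bool" where
  "independent P L X \<longleftrightarrow> X \<subseteq> P \<and> (\<forall>Y. Y \<subset> X \<longrightarrow> span P L Y \<noteq> span P L X)"

definition base :: "'a set \<Rightarrow> 'a set set \<Rightarrow> 'a set \<Rightarrow> bool" where
  "base P L B \<longleftrightarrow> independent P L B \<and> span P L B = P"

definition finitely_spanned :: "'a set \<Rightarrow> 'a set set \<Rightarrow> 'a set \<Rightarrow> bool" where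
  "finitely_spanned P L S \<longleftrightarrow> (\<exists>X. X \<subseteq> P \<and> finite X \<and> span P L X = S)"

definition dim :: "'a set \<Rightarrow> 'a set set \<Rightarrow> 'a set \<Rightarrow> int" where
  "dim P L S = int (LEAST k. \<exists>X. X \<subseteq> P \<and> finite X \<and> card X = k \<and> span P L X = S) - 1"

definition exchange_axiom :: "'a set \<Rightarrow> 'a set set \<Rightarrow> bool" where
  "exchange_axiom P L \<longleftrightarrow>
     (\<forall>X p1 p2. X \<subseteq> P \<longrightarrow> p1 \<in> P - span P L X \<longrightarrow> p2 \<in> P - span P L X \<longrightarrow>
        p2 \<in> span P L (insert p1 X) \<longrightarrow> p1 \<in> span P L (insert p2 X))"

end

theory Submission
  imports Defs
begin

lemma line_props:
  assumes "linear_space P L" "p \<in> P" "q \<in> P" "p \<noteq> q"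
  shows "line_through L p q \<in> L \<and> p \<in> line_through L p q \<and> q \<in> line_through L p q"
proof -
  have "\<forall>p\<in>P. \<forall>q\<in>P. p \<noteq> q \<longrightarrow> (\<exists>!l. l \<in> L \<and> p \<in> l \<and> q \<in> l)"
    using assms(1) unfolding linear_space_def by (rule conjunct2)
  then have "\<exists>!l. l \<in> L \<and> p \<in> l \<and> q \<in> l" using assms(2-4) by simp
  then show ?thesis unfolding line_through_def by (rule theI')
qed

lemma subspace_P: "linear_space P L \<Longrightarrow> subspace P L P"
  unfolding subspace_def
  by (metis line_props linear_space_def psubset_imp_subset subset_refl)

lemma span_sup: "X \<subseteq> span P L X"
  unfolding span_def by blast

lemma span_mono: "X \<subseteq> Y \<Longrightarrow> span P L X \<subseteq> span P L Y"
  unfolding span_def by blast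

lemma span_least: "subspace P L T \<Longrightarrow> X \<subseteq> T \<Longrightarrow> span P L X \<subseteq> T"
  unfolding span_def by blast

lemma span_subP: "linear_space P L \<Longrightarrow> X \<subseteq> P \<Longrightarrow> span P L X \<subseteq> P"
  by (rule span_least[OF subspace_P])

lemma subspace_span: assumes "linear_space P L" "X \<subseteq> P" shows "subspace P L (span P L X)"
  unfolding subspace_def
proof (intro conjI ballI impI)
  show "span P L X \<subseteq> P" using span_subP assms by blast
  fix p q assume pq: "p \<in> span P L X" "q \<in> span P L X" "p \<noteq> q"
  show "line_through L p q \<subseteq> span P L X"
    unfolding span_def
  proof (rule Inter_greatest)
    fix T assume "T \<in> {S. subspace P L S \<and> X \<subseteq> S}"
    then have T: "subspace P L T" "X \<subseteq> T" by auto
    then have "p \<in> T" "q \<in> T" using pq unfolding span_def by auto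
    then show "line_through L p q \<subseteq> T" using T pq(3) unfolding subspace_def by blast
  qed
qed

lemma span_subspace: "subspace P L S \<Longrightarrow> span P L S = S"
  using span_least span_sup by (metis subset_antisym subset_refl)

lemma span_span: "linear_space P L \<Longrightarrow> X \<subseteq> P \<Longrightarrow> span P L (span P L X) = span P L X"
  using span_subspace subspace_span by blast

lemma span_trans: "linear_space P L \<Longrightarrow> A \<subseteq> span P L X \<Longrightarrow> X \<subseteq> P \<Longrightarrow> span P L A \<subseteq> span P L X"
  by (meson span_least subspace_span)

lemma subspace_Int: "subspace P L S \<Longrightarrow> subspace P L U \<Longrightarrow> subspace P L (S \<inter> U)"
  unfolding subspace_def by blast

definition indep :: "'a set \<Rightarrow> 'a set set \<Rightarrow> 'a set \<Rightarrow> bool" where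
  "indep P L I \<longleftrightarrow> I \<subseteq> P \<and> (\<forall>x\<in>I. x \<notin> span P L (I - {x}))"

lemma independent_iff:
  assumes "linear_space P L"
  shows "independent P L I \<longleftrightarrow> indep P L I"
proof
  assume a: "independent P L I"
  have IP: "I \<subseteq> P" using a unfolding independent_def by (rule conjunct1)
  show "indep P L I" unfolding indep_def
  proof (intro conjI ballI notI)
    show "I \<subseteq> P" by (rule IP)
  next
    fix x assume x: "x \<in> I" "x \<in> span P L (I - {x})"
    have "I \<subseteq> span P L (I - {x})" using x span_sup[of "I - {x}" P L] by blast
    then have "span P L I \<subseteq> span P L (I - {x})"
      by (rule span_trans[OF assms]) (use IP in blast)
    moreover have "span P L (I - {x}) \<subseteq> span P L I" by (rule span_mono) blast
    ultimately have "span P L (I - {x}) = span P L I" by blast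
    moreover have "I - {x} \<subset> I" using x by blast
    ultimately show False using a unfolding independent_def by auto
  qed
next
  assume a: "indep P L I"
  show "independent P L I" unfolding independent_def
  proof (intro conjI allI impI)
    show "I \<subseteq> P" using a unfolding indep_def by blast
    fix Y assume Y: "Y \<subset> I"
    then obtain x where x: "x \<in> I" "x \<notin> Y" by blast
    show "span P L Y \<noteq> span P L I"
    proof
      assume e: "span P L Y = span P L I"
      have "x \<in> span P L Y" using e x span_sup[of I P L] by blast
      also have "\<dots> \<subseteq> span P L (I - {x})" using Y x by (intro span_mono) blast
      finally show False using a x unfolding indep_def by blast
    qed
  qed
qed

lemma indep_subset: "indep P L I \<Longrightarrow> J \<subseteq> I \<Longrightarrow> indep P L J"
  unfolding indep_def
proof (intro conjI ballI)
  assume a: "I \<subseteq> P \<and> (\<forall>x\<in>I. x \<notin> span P L (I - {x}))" and J: "J \<subseteq> I"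
  then show "J \<subseteq> P" by blast
  fix x assume x: "x \<in> J"
  have "span P L (J - {x}) \<subseteq> span P L (I - {x})" by (rule span_mono) (use J in blast)
  then show "x \<notin> span P L (J - {x})" using a x J by blast
qed

lemma indep_insert:
  assumes ls: "linear_space P L" and ex: "exchange_axiom P L"
    and I: "indep P L I" and s: "s \<in> P" "s \<notin> span P L I"
  shows "indep P L (insert s I)"
  unfolding indep_def
proof (intro conjI ballI)
  have IP: "I \<subseteq> P" using I unfolding indep_def by blast
  then show "insert s I \<subseteq> P" using s by blast
  have sI: "s \<notin> I" using s span_sup[of I P L] by blast
  fix x assume x: "x \<in> insert s I"
  show "x \<notin> span P L (insert s I - {x})"
  proof (cases "x = s")
    case True
    then show ?thesis using s sI by (simp add: insert_Diff_if)
  next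
    case False
    then have xI: "x \<in> I" using x by blast
    have eq: "insert s I - {x} = insert s (I - {x})" using False by blast
    show ?thesis
    proof
      assume h: "x \<in> span P L (insert s I - {x})"
      have "span P L (I - {x}) \<subseteq> span P L I" by (rule span_mono) blast
      then have "s \<in> P - span P L (I - {x})" using s by blast
      moreover have "x \<in> P - span P L (I - {x})" using I xI IP unfolding indep_def by blast
      moreover have "I - {x} \<subseteq> P" using IP by blast
      moreover have "x \<in> span P L (insert s (I - {x}))" using h eq by simp
      ultimately have "s \<in> span P L (insert x (I - {x}))"
        using ex unfolding exchange_axiom_def by blast
      moreover have "insert x (I - {x}) = I" using xI by blast
      ultimately show False using s by simp
    qed
  qed
qed

lemma steinitz_aux:
  assumes ls: "linear_space P L" and ex: "exchange_axiom P L"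
    and X: "finite X" "X \<subseteq> P"
  shows "card (I - X) = k \<Longrightarrow> finite I \<Longrightarrow> indep P L I \<Longrightarrow> I \<subseteq> span P L X \<Longrightarrow> card I \<le> card X"
proof (induction k arbitrary: I)
  case 0
  then have "I \<subseteq> X" by (simp add: X(1))
  then show ?case using X(1) by (simp add: card_mono)
next
  case (Suc k)
  then obtain i where i: "i \<in> I" "i \<notin> X" by (metis Diff_iff card_0_eq ex_in_conv finite_Diff nat.distinct(1))
  have IP: "I \<subseteq> P" using Suc.prems unfolding indep_def by blast
  have ni: "i \<notin> span P L (I - {i})" using Suc.prems i unfolding indep_def by blast
  have "\<not> X \<subseteq> span P L (I - {i})"
  proof
    assume "X \<subseteq> span P L (I - {i})"
    then have "span P L X \<subseteq> span P L (I - {i})"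
      by (rule span_trans[OF ls]) (use IP in blast)
    then show False using ni i Suc.prems by blast
  qed
  then obtain x where x: "x \<in> X" "x \<notin> span P L (I - {i})" by blast
  define I' where "I' = insert x (I - {i})"
  have xP: "x \<in> P" using x X by blast
  have ind: "indep P L I'" unfolding I'_def
    by (rule indep_insert[OF ls ex indep_subset[OF Suc.prems(3)]]) (use x xP in auto)
  have xn: "x \<notin> I - {i}" using x span_sup[of "I - {i}" P L] by blast
  have xi: "x \<noteq> i" using x i by blast
  have cI': "card I' = card I"
  proof -
    have "card I' = Suc (card (I - {i}))" unfolding I'_def using xn Suc.prems(2) by simp
    also have "\<dots> = card I" using i Suc.prems(2) card_Diff1_less[of I i]
      by (simp add: card_Diff_singleton)
    finally show ?thesis .
  qed
  have "I' - X = (I - X) - {i}" unfolding I'_def using x i by blast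
  then have "card (I' - X) = k" using Suc.prems(1) i by simp
  moreover have "finite I'" unfolding I'_def using Suc.prems(2) by simp
  moreover have "I' \<subseteq> span P L X" unfolding I'_def using Suc.prems(4) x span_sup[of X P L] by blast
  ultimately have "card I' \<le> card X" using Suc.IH ind by blast
  then show ?case using cI' by simp
qed

lemma steinitz:
  assumes "linear_space P L" "exchange_axiom P L" "finite X" "X \<subseteq> P"
    "finite I" "indep P L I" "I \<subseteq> span P L X"
  shows "card I \<le> card X"
  using steinitz_aux[OF assms(1-4) refl assms(5-7)] .


locale lsp =
  fixes P :: "'a set" and L :: "'a set set" and n :: nat
  assumes ls: "linear_space P L" and ex: "exchange_axiom P L"
    and fs: "finitely_spanned P L P" and dP: "dim P L P = int n"
begin

lemma X0: "\<exists>X0. X0 \<subseteq> P \<and> finite X0 \<and> card X0 = n + 1 \<and> span P L X0 = P"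
proof -
  let ?Q = "\<lambda>k. \<exists>X. X \<subseteq> P \<and> finite X \<and> card X = k \<and> span P L X = P"
  have "\<exists>k. ?Q k" using fs unfolding finitely_spanned_def by blast
  then have q: "?Q (Least ?Q)" by (rule LeastI_ex)
  have e: "Least ?Q = n + 1" using dP unfolding dim_def by linarith
  have "?Q (n + 1)" using q unfolding e .
  then show ?thesis by (elim exE) (rule exI, assumption)
qed

lemma indep_bound: assumes "indep P L I" shows "finite I \<and> card I \<le> n + 1"
proof -
  obtain X0 where X0: "X0 \<subseteq> P" "finite X0" "card X0 = n + 1" "span P L X0 = P" using X0 by blast
  have IP: "I \<subseteq> P" using assms unfolding indep_def by blast
  have fin: "card F \<le> n + 1" if "F \<subseteq> I" "finite F" for F
  proof -
    have "F \<subseteq> span P L X0" using that(1) IP X0(4) by blast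
    then have "card F \<le> card X0" by (rule steinitz[OF ls ex X0(2,1) that(2) indep_subset[OF assms that(1)]])
    then show ?thesis using X0(3) by simp
  qed
  have "finite I"
  proof (rule ccontr)
    assume "infinite I"
    then obtain F where "F \<subseteq> I" "finite F" "card F = n + 2" using infinite_arbitrarily_large by blast
    then have "n + 2 \<le> n + 1" using fin by metis
    then show False by simp
  qed
  then show ?thesis using fin by blast
qed

lemma extend:
  assumes S: "subspace P L S" and J: "indep P L J" "J \<subseteq> S"
  shows "\<exists>I. indep P L I \<and> J \<subseteq> I \<and> I \<subseteq> S \<and> span P L I = S"
proof -
  let ?Q = "\<lambda>K. indep P L K \<and> J \<subseteq> K \<and> K \<subseteq> S"
  have "\<forall>y. ?Q y \<longrightarrow> card y < n + 2" using indep_bound by fastforce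
  then obtain I where I: "?Q I" and mx: "\<forall>y. ?Q y \<longrightarrow> card y \<le> card I"
    using ex_has_greatest_nat[of ?Q J card "n+2"] J by blast
  have SP: "S \<subseteq> P" using S unfolding subspace_def by blast
  have "S \<subseteq> span P L I"
  proof
    fix s assume s: "s \<in> S"
    show "s \<in> span P L I"
    proof (rule ccontr)
      assume ns: "s \<notin> span P L I"
      have "?Q (insert s I)" using indep_insert[OF ls ex _ _ ns] I s SP by blast
      then have "card (insert s I) \<le> card I" using mx by blast
      moreover have "finite I" using indep_bound I by blast
      moreover have "s \<notin> I" using ns span_sup[of I P L] by blast
      ultimately show False by simp
    qed
  qed
  moreover have "span P L I \<subseteq> S" using span_least[OF S] I by blast
  ultimately show ?thesis using I by blast
qed

lemma dim_eq: assumes "indep P L I" shows "dim P L (span P L I) = int (card I) - 1"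
proof -
  have IP: "I \<subseteq> P" and fI: "finite I" using assms indep_bound unfolding indep_def by auto
  have "(LEAST k. \<exists>X. X \<subseteq> P \<and> finite X \<and> card X = k \<and> span P L X = span P L I) = card I"
  proof (rule Least_equality)
    show "\<exists>X. X \<subseteq> P \<and> finite X \<and> card X = card I \<and> span P L X = span P L I" using IP fI by blast
  next
    fix y assume "\<exists>X. X \<subseteq> P \<and> finite X \<and> card X = y \<and> span P L X = span P L I"
    then obtain X where X: "X \<subseteq> P" "finite X" "card X = y" "span P L X = span P L I" by blast
    show "card I \<le> y" using steinitz[OF ls ex X(2,1) fI assms] X span_sup[of I P L] by blast
  qed
  then show ?thesis unfolding dim_def by simp
qed

lemma spanning_min:
  assumes A: "finite A" "A \<subseteq> P" and I: "indep P L I" and c: "card A \<le> card I"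
    and sp: "span P L A = span P L I"
  shows "indep P L A"
proof (rule ccontr)
  assume "\<not> indep P L A"
  then obtain w where w: "w \<in> A" "w \<in> span P L (A - {w})" using A unfolding indep_def by blast
  have "A \<subseteq> span P L (A - {w})" using w span_sup[of "A - {w}" P L] by blast
  then have "span P L A \<subseteq> span P L (A - {w})"
    by (rule span_trans[OF ls]) (use A in blast)
  then have "I \<subseteq> span P L (A - {w})" using sp span_sup[of I P L] by blast
  moreover have "finite I" using indep_bound I by blast
  ultimately have "card I \<le> card (A - {w})" using steinitz[OF ls ex _ _ _ I] A by blast
  moreover have "card (A - {w}) < card A" using A w by (meson card_Diff1_less)
  ultimately show False using c by simp
qed

lemma span_union:
  assumes "A \<subseteq> P" "B \<subseteq> P"
  shows "span P L (A \<union> B) = span P L (span P L A \<union> span P L B)"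
proof
  show "span P L (A \<union> B) \<subseteq> span P L (span P L A \<union> span P L B)"
    by (rule span_mono) (use span_sup[of A P L] span_sup[of B P L] in blast)
  have "span P L A \<union> span P L B \<subseteq> span P L (A \<union> B)"
    using span_mono by (metis Un_least sup_ge1 sup_ge2)
  then show "span P L (span P L A \<union> span P L B) \<subseteq> span P L (A \<union> B)"
    by (rule span_trans[OF ls]) (use assms in blast)
qed

end

theorem proposition2p3:
  fixes P :: "'a set" and L :: "'a set set" and n :: nat and S U :: "'a set"
  assumes "linear_space P L"
    and "exchange_axiom P L"
    and "finitely_spanned P L P" and "dim P L P = int n"
    and "subspace P L S" and "subspace P L U" and "S \<noteq> U"
  shows "(\<exists>B. base P L B \<and> (\<exists>X\<subseteq>B. span P L X = S) \<and> (\<exists>Y\<subseteq>B. span P L Y = U))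
     \<longleftrightarrow> dim P L (span P L (S \<union> U)) = dim P L S + dim P L U - dim P L (S \<inter> U)"
proof -
  interpret lsp P L n using assms(1-4) by unfold_locales
  have ls: "linear_space P L" and ex: "exchange_axiom P L" using assms by auto
  have SP: "S \<subseteq> P" and UP: "U \<subseteq> P" using assms(5,6) unfolding subspace_def by auto
  have e0: "indep P L {}" unfolding indep_def by simp
  obtain Z where Z: "indep P L Z" "Z \<subseteq> S \<inter> U" "span P L Z = S \<inter> U"
    using extend[OF subspace_Int[OF assms(5,6)] e0] by blast
  obtain X' where X': "indep P L X'" "Z \<subseteq> X'" "X' \<subseteq> S" "span P L X' = S"
    using extend[OF assms(5) Z(1)] Z(2) by blast
  obtain Y' where Y': "indep P L Y'" "Z \<subseteq> Y'" "Y' \<subseteq> U" "span P L Y' = U"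
    using extend[OF assms(6) Z(1)] Z(2) by blast
  have XYZ: "X' \<inter> Y' = Z"
  proof
    show "X' \<inter> Y' \<subseteq> Z"
    proof
      fix w assume w: "w \<in> X' \<inter> Y'"
      show "w \<in> Z"
      proof (rule ccontr)
        assume "w \<notin> Z"
        then have "Z \<subseteq> X' - {w}" using X' by blast
        then have "span P L Z \<subseteq> span P L (X' - {w})" by (rule span_mono)
        moreover have "w \<in> span P L Z" using Z w X' Y' by blast
        ultimately show False using X'(1) w unfolding indep_def by blast
      qed
    qed
  qed (use X' Y' in blast)
  define W where "W = X' \<union> Y'"
  have fX': "finite X'" and fY': "finite Y'" and fZ: "finite Z" using X' Y' Z indep_bound by auto
  have fW: "finite W" unfolding W_def using fX' fY' by simp
  have WP: "W \<subseteq> P" unfolding W_def using X' Y' SP UP by blast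
  have X'P: "X' \<subseteq> P" and Y'P: "Y' \<subseteq> P" using X' Y' SP UP by auto
  have spW: "span P L W = span P L (S \<union> U)"
    unfolding W_def using span_union[OF X'P Y'P] X'(4) Y'(4) by simp
  have cW: "card W + card Z = card X' + card Y'"
    unfolding W_def using card_Un_Int[OF fX' fY'] XYZ by simp
  have SUP: "S \<union> U \<subseteq> P" using SP UP by blast
  obtain V where V: "indep P L V" "V \<subseteq> span P L (S \<union> U)" "span P L V = span P L (S \<union> U)"
    using extend[OF subspace_span[OF ls SUP] e0] by blast
  have fV: "finite V" using V indep_bound by blast
  have "V \<subseteq> span P L W" using V(2) spW by simp
  then have VW: "card V \<le> card W" by (rule steinitz[OF ls ex fW WP fV V(1)])
  have dS: "dim P L S = int (card X') - 1" using dim_eq[OF X'(1)] X' by simp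
  have dU: "dim P L U = int (card Y') - 1" using dim_eq[OF Y'(1)] Y' by simp
  have dSU: "dim P L (S \<inter> U) = int (card Z) - 1" using dim_eq[OF Z(1)] Z by simp
  have dV: "dim P L (span P L (S \<union> U)) = int (card V) - 1" using dim_eq[OF V(1)] V by simp
  have key: "dim P L (span P L (S \<union> U)) = dim P L S + dim P L U - dim P L (S \<inter> U)
      \<longleftrightarrow> card V = card W" using dS dU dSU dV cW by linarith
  show ?thesis unfolding key
  proof
    assume "\<exists>B. base P L B \<and> (\<exists>X\<subseteq>B. span P L X = S) \<and> (\<exists>Y\<subseteq>B. span P L Y = U)"
    then obtain B X Y where B: "base P L B" "X \<subseteq> B" "span P L X = S" "Y \<subseteq> B" "span P L Y = U"
      by blast
    have iB: "indep P L B" using B(1) independent_iff[OF ls] unfolding base_def by blast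
    have iX: "indep P L X" using indep_subset[OF iB] B(2) by blast
    have iY: "indep P L Y" using indep_subset[OF iB] B(4) by blast
    have iXY: "indep P L (X \<union> Y)" by (rule indep_subset[OF iB]) (use B in blast)
    have iI: "indep P L (X \<inter> Y)" by (rule indep_subset[OF iB]) (use B in blast)
    have fX: "finite X" and fY: "finite Y" using iX iY indep_bound by auto
    have XP: "X \<subseteq> P" and YP: "Y \<subseteq> P" using iX iY unfolding indep_def by auto
    have "int (card X) - 1 = int (card X') - 1" using dim_eq[OF iX] dS B by simp
    then have cX: "card X = card X'" by simp
    have "int (card Y) - 1 = int (card Y') - 1" using dim_eq[OF iY] dU B by simp
    then have cY: "card Y = card Y'" by simp
    have spXY: "span P L (X \<union> Y) = span P L (S \<union> U)" using span_union[OF XP YP] B by simp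
    have "int (card (X \<union> Y)) - 1 = int (card V) - 1" using dim_eq[OF iXY] dV spXY by simp
    then have cXY: "card (X \<union> Y) = card V" by simp
    have "X \<subseteq> S" "Y \<subseteq> U" using B span_sup[of X P L] span_sup[of Y P L] by auto
    then have "X \<inter> Y \<subseteq> span P L Z" using Z(3) by blast
    moreover have "Z \<subseteq> P" using Z(2) SP by blast
    moreover have "finite (X \<inter> Y)" using fX by simp
    ultimately have cI: "card (X \<inter> Y) \<le> card Z"
      using steinitz[OF ls ex fZ _ _ iI] by blast
    have "card (X \<union> Y) + card (X \<inter> Y) = card X + card Y" using card_Un_Int[OF fX fY] by simp
    then show "card V = card W" using cX cY cXY cI cW VW by linarith
  next
    assume cVW: "card V = card W"
    have iW: "indep P L W" using spanning_min[OF fW WP V(1)] cVW spW V by simp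
    obtain B where B: "indep P L B" "W \<subseteq> B" "B \<subseteq> P" "span P L B = P"
      using extend[OF subspace_P[OF ls] iW WP] by blast
    have "base P L B" unfolding base_def using B independent_iff[OF ls] by blast
    moreover have "X' \<subseteq> B" "Y' \<subseteq> B" using B unfolding W_def by auto
    ultimately show "\<exists>B. base P L B \<and> (\<exists>X\<subseteq>B. span P L X = S) \<and> (\<exists>Y\<subseteq>B. span P L Y = U)"
      using X' Y' by blast
  qed
qed

end
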